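(* Let $b\in(0,+\infty]$, $\beta>0$, $\alpha\ge0$, and $L'>L\ge0$ with $L+\alpha>0$. If $u,g\in\mathbb R$ satisfy $u\in H^{FP}_{\alpha,\beta,L,b}(g)$, then $u\in H^{FP}_{\alpha,\beta,L',b}(g)$.
   Context: For $L\ge0$ with $L+\alpha>0$, put $s:=\beta/(L+\alpha)$; the set $H^{FP}_{\alpha,\beta,L,b}(g)$ for $g\in\mathbb R$ is defined as follows. If $\sqrt{2s}\le b$: $u\in H^{FP}_{\alpha,\beta,L,b}(g)$ iff one of (a) $u=-b$ and $g\ge\alpha b$; (b) $u=b$ and $g\le-\alpha b$; (c) $u=0$ and $|g|\le(L+\alpha)\sqrt{2s}$; (d) $\alpha>0$, $\alpha u=-g$ and $|g|\in\alpha[\sqrt{2s},b]$; (e) $\alpha=0$, $g=0$ and $|u|\in[\sqrt{2s},b]$ holds (with (a),(b) void if $b=+\infty$). If $\sqrt{2s}>b$: $u\in H^{FP}_{\alpha,\beta,L,b}(g)$ iff one of (a) $u=-b$ and $g\ge(L+\alpha)(b/2+s/b)-Lb$; (b) $u=b$ and $g\le-\big((L+\alpha)(b/2+s/b)-Lb\big)$; (c) $u=0$ and $|g|\le(L+\alpha)(b/2+s/b)$; (d) $\alpha>0$, $\alpha u=-g$ and $|g|\in\alpha[\sqrt{2s},b]$; (e) $\alpha=0$, $g=0$ and $|u|\in[\sqrt{2s},b]$ holds. *)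

theory Defs
  imports Complex_Main "HOL-Library.Extended_Real"
begin

text \<open>The set H^FP_{alpha,beta,L,b}(g). The parameter b ranges over (0,+infinity],
  modelled as an extended real. Cases (a),(b) require b finite (they are void for b = infinity).\<close>

definition HFP :: "real \<Rightarrow> real \<Rightarrow> real \<Rightarrow> ereal \<Rightarrow> real \<Rightarrow> real set" where
  "HFP \<alpha> \<beta> L b g = (let s = \<beta> / (L + \<alpha>); bb = real_of_ereal b in
     if ereal (sqrt (2 * s)) \<le> b then
       {u. (b \<noteq> \<infinity> \<and> u = - bb \<and> g \<ge> \<alpha> * bb)
         \<or> (b \<noteq> \<infinity> \<and> u = bb \<and> g \<le> - (\<alpha> * bb))
         \<or> (u = 0 \<and> \<bar>g\<bar> \<le> (L + \<alpha>) * sqrt (2 * s))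
         \<or> (\<alpha> > 0 \<and> \<alpha> * u = - g \<and> \<alpha> * sqrt (2 * s) \<le> \<bar>g\<bar> \<and> ereal \<bar>g\<bar> \<le> ereal \<alpha> * b)
         \<or> (\<alpha> = 0 \<and> g = 0 \<and> sqrt (2 * s) \<le> \<bar>u\<bar> \<and> ereal \<bar>u\<bar> \<le> b)}
     else
       {u. (u = - bb \<and> g \<ge> (L + \<alpha>) * (bb / 2 + s / bb) - L * bb)
         \<or> (u = bb \<and> g \<le> - ((L + \<alpha>) * (bb / 2 + s / bb) - L * bb))
         \<or> (u = 0 \<and> \<bar>g\<bar> \<le> (L + \<alpha>) * (bb / 2 + s / bb))
         \<or> (\<alpha> > 0 \<and> \<alpha> * u = - g \<and> \<alpha> * sqrt (2 * s) \<le> \<bar>g\<bar> \<and> \<bar>g\<bar> \<le> \<alpha> * bb)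
         \<or> (\<alpha> = 0 \<and> g = 0 \<and> sqrt (2 * s) \<le> \<bar>u\<bar> \<and> \<bar>u\<bar> \<le> bb)})"

end

theory Submission
  imports Defs
begin

lemma tsq: assumes "t > 0" "\<beta> > 0" shows "t * sqrt (2 * (\<beta> / t)) = sqrt (2 * \<beta> * t)"
proof -
  have "t * sqrt (2 * (\<beta> / t)) = sqrt (t^2) * sqrt (2 * (\<beta> / t))" using assms by simp
  also have "\<dots> = sqrt (t^2 * (2 * (\<beta> / t)))" by (rule real_sqrt_mult[symmetric])
  also have "t^2 * (2 * (\<beta> / t)) = 2 * \<beta> * t" using assms by (simp add: power2_eq_square field_simps)
  finally show ?thesis .
qed

theorem mainTheorem13:
  fixes b :: ereal and \<alpha> \<beta> L L' u g :: real
  assumes "b > 0" and "\<beta> > 0" and "\<alpha> \<ge> 0" and "L \<ge> 0" and "L' > L" and "L + \<alpha> > 0"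
    and "u \<in> HFP \<alpha> \<beta> L b g"
  shows "u \<in> HFP \<alpha> \<beta> L' b g"
proof -
  define t where "t = L + \<alpha>"
  define t' where "t' = L' + \<alpha>"
  have tp: "t > 0" "t' > t" using assms by (auto simp: t_def t'_def)
  have ss: "sqrt (2 * (\<beta> / t')) \<le> sqrt (2 * (\<beta> / t))"
    using tp assms(2) by (simp add: frac_le)
  have sq: "sqrt (2 * \<beta> * t) \<le> sqrt (2 * \<beta> * t')" using tp assms(2) by simp
  have e1: "t * sqrt (2 * (\<beta> / t)) = sqrt (2 * \<beta> * t)" using tsq tp assms(2) by simp
  have e2: "t' * sqrt (2 * (\<beta> / t')) = sqrt (2 * \<beta> * t')" using tsq tp assms(2) by simp
  have as: "\<alpha> * sqrt (2 * (\<beta> / t')) \<le> \<alpha> * sqrt (2 * (\<beta> / t))"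
    using ss assms(3) by (simp add: mult_left_mono)
  show ?thesis
  proof (cases b)
    case PInf
    from assms(7) have "u \<in> {u. (u = 0 \<and> \<bar>g\<bar> \<le> t * sqrt (2 * (\<beta>/t)))
         \<or> (\<alpha> > 0 \<and> \<alpha> * u = - g \<and> \<alpha> * sqrt (2 * (\<beta>/t)) \<le> \<bar>g\<bar>)
         \<or> (\<alpha> = 0 \<and> g = 0 \<and> sqrt (2 * (\<beta>/t)) \<le> \<bar>u\<bar>)}"
      unfolding HFP_def Let_def PInf t_def[symmetric] by auto
    hence G: "u \<in> {u. (u = 0 \<and> \<bar>g\<bar> \<le> t' * sqrt (2 * (\<beta>/t')))
         \<or> (\<alpha> > 0 \<and> \<alpha> * u = - g \<and> \<alpha> * sqrt (2 * (\<beta>/t')) \<le> \<bar>g\<bar>)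
         \<or> (\<alpha> = 0 \<and> g = 0 \<and> sqrt (2 * (\<beta>/t')) \<le> \<bar>u\<bar>)}"
      unfolding mem_Collect_eq using e1 e2 sq as ss by (smt (verit))
    then show ?thesis unfolding HFP_def Let_def PInf t'_def[symmetric] by auto
  next
    case MInf then show ?thesis using assms(1) by simp
  next
    case (real c)
    have cp: "c > 0" using assms(1) real by simp
    show ?thesis
    proof (cases "sqrt (2 * (\<beta> / t)) \<le> c")
      case True
      hence T2: "sqrt (2 * (\<beta> / t')) \<le> c" using ss by linarith
      from assms(7) True have "u \<in> {u. (u = - c \<and> g \<ge> \<alpha> * c)
         \<or> (u = c \<and> g \<le> - (\<alpha> * c))
         \<or> (u = 0 \<and> \<bar>g\<bar> \<le> t * sqrt (2 * (\<beta>/t)))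
         \<or> (\<alpha> > 0 \<and> \<alpha> * u = - g \<and> \<alpha> * sqrt (2 * (\<beta>/t)) \<le> \<bar>g\<bar> \<and> \<bar>g\<bar> \<le> \<alpha> * c)
         \<or> (\<alpha> = 0 \<and> g = 0 \<and> sqrt (2 * (\<beta>/t)) \<le> \<bar>u\<bar> \<and> \<bar>u\<bar> \<le> c)}"
        unfolding HFP_def Let_def real t_def[symmetric] by simp
      hence G: "u \<in> {u. (u = - c \<and> g \<ge> \<alpha> * c)
         \<or> (u = c \<and> g \<le> - (\<alpha> * c))
         \<or> (u = 0 \<and> \<bar>g\<bar> \<le> t' * sqrt (2 * (\<beta>/t')))
         \<or> (\<alpha> > 0 \<and> \<alpha> * u = - g \<and> \<alpha> * sqrt (2 * (\<beta>/t')) \<le> \<bar>g\<bar> \<and> \<bar>g\<bar> \<le> \<alpha> * c)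
         \<or> (\<alpha> = 0 \<and> g = 0 \<and> sqrt (2 * (\<beta>/t')) \<le> \<bar>u\<bar> \<and> \<bar>u\<bar> \<le> c)}"
        unfolding mem_Collect_eq using e1 e2 sq as ss by (smt (verit))
      then show ?thesis unfolding HFP_def Let_def real t'_def[symmetric]
        using T2 by auto
    next
      case False
      hence lt: "c < sqrt (2 * (\<beta> / t))" by simp
      from assms(7) False have H: "u \<in> {u. (u = - c \<and> g \<ge> t * (c / 2 + (\<beta>/t) / c) - L * c)
         \<or> (u = c \<and> g \<le> - (t * (c / 2 + (\<beta>/t) / c) - L * c))
         \<or> (u = 0 \<and> \<bar>g\<bar> \<le> t * (c / 2 + (\<beta>/t) / c))}"
      proof -
        from assms(7) False have R: "u \<in> {u. (u = - c \<and> g \<ge> t * (c / 2 + (\<beta>/t) / c) - L * c)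
         \<or> (u = c \<and> g \<le> - (t * (c / 2 + (\<beta>/t) / c) - L * c))
         \<or> (u = 0 \<and> \<bar>g\<bar> \<le> t * (c / 2 + (\<beta>/t) / c))
         \<or> (\<alpha> > 0 \<and> \<alpha> * u = - g \<and> \<alpha> * sqrt (2 * (\<beta>/t)) \<le> \<bar>g\<bar> \<and> \<bar>g\<bar> \<le> \<alpha> * c)
         \<or> (\<alpha> = 0 \<and> g = 0 \<and> sqrt (2 * (\<beta>/t)) \<le> \<bar>u\<bar> \<and> \<bar>u\<bar> \<le> c)}"
          unfolding HFP_def Let_def real t_def[symmetric] by simp
        have m: "\<alpha> > 0 \<Longrightarrow> \<alpha> * c < \<alpha> * sqrt (2 * (\<beta>/t))" using lt by simp
        show ?thesis using R m lt unfolding mem_Collect_eq by (smt (verit))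
      qed
      have f1: "t * (c / 2 + (\<beta>/t) / c) = t * c / 2 + \<beta> / c" using tp cp by (simp add: field_simps)
      have f2: "t' * (c / 2 + (\<beta>/t') / c) = t' * c / 2 + \<beta> / c" using tp cp by (simp add: field_simps)
      have "c^2 < 2 * (\<beta> / t)" using lt cp
        by (metis abs_of_pos real_sqrt_abs real_sqrt_less_iff)
      hence cc: "t * c * c < 2 * \<beta>" using tp by (simp add: field_simps power2_eq_square)
      hence bc: "t * c / 2 < \<beta> / c" using cp by (simp add: field_simps)
      show ?thesis
      proof (cases "sqrt (2 * (\<beta> / t')) \<le> c")
        case True
        have "c^2 \<ge> 2 * (\<beta> / t')" using True cp
          by (metis abs_of_pos real_sqrt_abs real_sqrt_le_iff)
        hence "t' * c * c \<ge> 2 * \<beta>" using tp by (simp add: field_simps power2_eq_square)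
        hence "t' \<ge> 2 * \<beta> / (c*c)" using cp by (simp add: field_simps)
        hence "2 * \<beta> * t' \<ge> 2 * \<beta> * (2 * \<beta> / (c*c))"
          using assms(2) by (simp only: mult_le_cancel_left_pos mult_pos_pos zero_less_numeral)
        hence "sqrt (2 * \<beta> * t') \<ge> sqrt (2 * \<beta> * (2 * \<beta> / (c*c)))"
          using real_sqrt_le_mono by blast
        moreover have "sqrt (2 * \<beta> * (2 * \<beta> / (c*c))) = 2 * \<beta> / c"
        proof -
          have "2 * \<beta> * (2 * \<beta> / (c*c)) = (2 * \<beta> / c)^2" using cp by (simp add: field_simps power2_eq_square)
          then show ?thesis using cp assms(2) by simp
        qed
        ultimately have k: "t * c / 2 + \<beta> / c \<le> t' * sqrt (2 * (\<beta> / t'))" using e2 bc by linarith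
        have k2: "t * c / 2 + \<beta> / c - L * c \<ge> \<alpha> * c" proof -
          have "t*c = L*c + \<alpha>*c" by (simp add: t_def algebra_simps)
          then show ?thesis using bc by linarith
        qed
        from H show ?thesis unfolding HFP_def Let_def real t'_def[symmetric]
          using True f1 k k2 by auto
      next
        case False
        have k: "t' * c / 2 + \<beta> / c - L' * c \<le> t * c / 2 + \<beta> / c - L * c"
        proof -
          have "L*c \<le> L'*c" using cp assms(5) by simp
          moreover have "t'*c = L'*c + \<alpha>*c" "t*c = L*c + \<alpha>*c" by (simp_all add: t_def t'_def algebra_simps)
          ultimately show ?thesis by linarith
        qed
        have k2: "t * c / 2 \<le> t' * c / 2" using tp cp by simp
        from H show ?thesis unfolding HFP_def Let_def real t'_def[symmetric]
          using False f1 f2 k k2 by auto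
      qed
    qed
  qed
qed

end
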